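(* For every infinite group $G$, $FT_G\subsetneq Sp_G$; consequently $\overline{G^*G^*}\subsetneq FT_G^{\wedge}$.
   Context: A subset $A$ of $G$ is $n$-thin ($n\in\mathbb{N}$) if for all distinct $g_0,\dots,g_n\in G$ the set $g_0A\cap\dots\cap g_nA$ is finite; finitely thin if it is $n$-thin for some $n$. $FT_G$ is the family of finitely thin subsets. $A$ is sparse if for every infinite $X\subseteq G$ there is finite $F\subseteq X$ with $\bigcap_{g\in F}gA$ finite; $Sp_G$ is the family of sparse subsets. $\beta G$ is the semigroup of ultrafilters on $G$ (with the standard extension of multiplication), $G^*$ the free ultrafilters, $\overline{G^*G^*}$ the closure of $\{pq:p,q\in G^*\}$. For an ideal $\mathcal{I}$ of subsets of $G$, $\mathcal{I}^{\wedge}=\{p\in\beta G: G\setminus A\in p$ for each $A\in\mathcal{I}\}$. *)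

theory Defs
  imports "HOL-Algebra.Group" "HOL-Algebra.Coset"
begin

definition n_thin :: "('a, 'b) monoid_scheme \<Rightarrow> nat \<Rightarrow> 'a set \<Rightarrow> bool" where
  "n_thin G n A \<longleftrightarrow> A \<subseteq> carrier G \<and>
     (\<forall>g :: nat \<Rightarrow> 'a. (\<forall>i\<le>n. g i \<in> carrier G) \<and> inj_on g {..n} \<longrightarrow>
        finite (\<Inter>i\<in>{..n}. g i <#\<^bsub>G\<^esub> A))"

definition FT :: "('a, 'b) monoid_scheme \<Rightarrow> 'a set set" where
  "FT G = {A. A \<subseteq> carrier G \<and> (\<exists>n. n_thin G n A)}"

definition Sp :: "('a, 'b) monoid_scheme \<Rightarrow> 'a set set" where
  "Sp G = {A. A \<subseteq> carrier G \<and>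
     (\<forall>X. X \<subseteq> carrier G \<and> infinite X \<longrightarrow>
        (\<exists>F. F \<subseteq> X \<and> finite F \<and> F \<noteq> {} \<and> finite (\<Inter>g\<in>F. g <#\<^bsub>G\<^esub> A)))}"

text \<open>The Stone-Cech compactification \<beta>G: ultrafilters on the set G.\<close>
definition betaG :: "('a, 'b) monoid_scheme \<Rightarrow> 'a set set set" where
  "betaG G = {U. U \<subseteq> Pow (carrier G) \<and> carrier G \<in> U \<and> {} \<notin> U \<and>
     (\<forall>A B. A \<in> U \<and> B \<in> U \<longrightarrow> A \<inter> B \<in> U) \<and>
     (\<forall>A B. A \<in> U \<and> A \<subseteq> B \<and> B \<subseteq> carrier G \<longrightarrow> B \<in> U) \<and>
     (\<forall>A. A \<subseteq> carrier G \<longrightarrow> A \<in> U \<or> carrier G - A \<in> U)}"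

definition freeUF :: "('a, 'b) monoid_scheme \<Rightarrow> 'a set set set" where
  "freeUF G = {p \<in> betaG G. \<forall>A\<in>p. infinite A}"

definition uf_mult :: "('a, 'b) monoid_scheme \<Rightarrow> 'a set set \<Rightarrow> 'a set set \<Rightarrow> 'a set set" where
  "uf_mult G p q = {A. A \<subseteq> carrier G \<and>
     {g \<in> carrier G. (inv\<^bsub>G\<^esub> g) <#\<^bsub>G\<^esub> A \<in> q} \<in> p}"

text \<open>Closure in the Stone topology of \<beta>G (basic open sets \<bar>A\<bar> = {p. A \<in> p}).\<close>
definition uf_closure :: "('a, 'b) monoid_scheme \<Rightarrow> 'a set set set \<Rightarrow> 'a set set set" where
  "uf_closure G S = {p \<in> betaG G. \<forall>A\<in>p. \<exists>q\<in>S. A \<in> q}"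

definition ideal_hat :: "('a, 'b) monoid_scheme \<Rightarrow> 'a set set \<Rightarrow> 'a set set set" where
  "ideal_hat G I = {p \<in> betaG G. \<forall>A\<in>I. carrier G - A \<in> p}"

end

theory Submission
  imports Defs "HOL-Library.Nat_Bijection"
begin


context group begin

lemma lcoset_mem:
  assumes "g \<in> carrier G" "A \<subseteq> carrier G"
  shows "x \<in> g <# A \<longleftrightarrow> x \<in> carrier G \<and> inv g \<otimes> x \<in> A"
proof
  assume "x \<in> g <# A"
  then obtain a where a: "a \<in> A" "x = g \<otimes> a" unfolding l_coset_def by auto
  then have "a \<in> carrier G" using assms by auto
  then show "x \<in> carrier G \<and> inv g \<otimes> x \<in> A" using a assms
    by (simp add: m_assoc[symmetric])
next
  assume "x \<in> carrier G \<and> inv g \<otimes> x \<in> A"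
  then have "x = g \<otimes> (inv g \<otimes> x)" using assms by (simp add: m_assoc[symmetric])
  then show "x \<in> g <# A" unfolding l_coset_def using \<open>x \<in> carrier G \<and> inv g \<otimes> x \<in> A\<close> by blast
qed

lemma thin_set:
  assumes "n_thin G n A" "S \<subseteq> carrier G" "card S = Suc n"
  shows "finite (\<Inter>g\<in>S. g <# A)"
proof -
  have fS: "finite S" using assms(3) card_ge_0_finite by force
  obtain h where h: "bij_betw h {..n} S"
    using finite_same_card_bij[of "{..n}" S] fS assms(3) by auto
  have "\<forall>i\<le>n. h i \<in> carrier G" using h assms(2) bij_betw_apply by fastforce
  moreover have "inj_on h {..n}" using h bij_betw_def by blast
  ultimately have "finite (\<Inter>i\<in>{..n}. h i <# A)" using assms(1) unfolding n_thin_def by blast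
  moreover have "(\<Inter>i\<in>{..n}. h i <# A) = (\<Inter>g\<in>S. g <# A)"
  proof -
    have "h ` {..n} = S" using h bij_betw_imp_surj_on by blast
    then show ?thesis by auto
  qed
  ultimately show ?thesis by simp
qed

lemma thin_of_set:
  assumes "A \<subseteq> carrier G" "\<And>S. S \<subseteq> carrier G \<Longrightarrow> card S = Suc n \<Longrightarrow> finite (\<Inter>g\<in>S. g <# A)"
  shows "n_thin G n A"
  unfolding n_thin_def
proof (intro conjI allI impI)
  fix h :: "nat \<Rightarrow> 'a" assume h: "(\<forall>i\<le>n. h i \<in> carrier G) \<and> inj_on h {..n}"
  have "card (h ` {..n}) = Suc n" using h card_image by fastforce
  moreover have "h ` {..n} \<subseteq> carrier G" using h by auto
  ultimately have "finite (\<Inter>g\<in>h ` {..n}. g <# A)" using assms(2) by blast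
  then show "finite (\<Inter>i\<in>{..n}. h i <# A)" by (simp add: image_image)
qed (use assms in auto)

lemma thin_subset:
  assumes "n_thin G n A" "C \<subseteq> A"
  shows "n_thin G n C"
proof (rule thin_of_set)
  show "C \<subseteq> carrier G" using assms unfolding n_thin_def by auto
  fix S assume "S \<subseteq> carrier G" "card S = Suc n"
  then have "finite (\<Inter>g\<in>S. g <# A)" using thin_set assms by blast
  moreover have "S \<noteq> {}" using \<open>card S = Suc n\<close> by auto
  moreover have "(\<Inter>g\<in>S. g <# C) \<subseteq> (\<Inter>g\<in>S. g <# A)"
    using assms(2) unfolding l_coset_def by blast
  ultimately show "finite (\<Inter>g\<in>S. g <# C)" using finite_subset by blast
qed

lemma thin_union:
  assumes "n_thin G n A" "n_thin G m C"
  shows "n_thin G (n + m + 1) (A \<union> C)"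
proof (rule thin_of_set)
  have AC: "A \<subseteq> carrier G" "C \<subseteq> carrier G" using assms unfolding n_thin_def by auto
  then show "A \<union> C \<subseteq> carrier G" by auto
  fix S assume S: "S \<subseteq> carrier G" "card S = Suc (n + m + 1)"
  have fS: "finite S" using S(2) card_ge_0_finite by force
  let ?U = "(\<Union>T\<in>{T. T \<subseteq> S \<and> card T = Suc n}. \<Inter>g\<in>T. g <# A) \<union>
            (\<Union>T\<in>{T. T \<subseteq> S \<and> card T = Suc m}. \<Inter>g\<in>T. g <# C)"
  have "finite ?U"
  proof (rule finite_UnI)
    have f1: "finite {T. T \<subseteq> S \<and> card T = Suc n}"
      by (rule finite_subset[of _ "Pow S"]) (use fS in auto)
    have f2: "finite {T. T \<subseteq> S \<and> card T = Suc m}"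
      by (rule finite_subset[of _ "Pow S"]) (use fS in auto)
    show "finite (\<Union>T\<in>{T. T \<subseteq> S \<and> card T = Suc n}. \<Inter>g\<in>T. g <# A)"
    proof (rule finite_UN_I[OF f1])
      fix T assume "T \<in> {T. T \<subseteq> S \<and> card T = Suc n}"
      then show "finite (\<Inter>g\<in>T. g <# A)" using thin_set[OF assms(1)] S(1) by auto
    qed
    show "finite (\<Union>T\<in>{T. T \<subseteq> S \<and> card T = Suc m}. \<Inter>g\<in>T. g <# C)"
    proof (rule finite_UN_I[OF f2])
      fix T assume "T \<in> {T. T \<subseteq> S \<and> card T = Suc m}"
      then show "finite (\<Inter>g\<in>T. g <# C)" using thin_set[OF assms(2)] S(1) by auto
    qed
  qed
  moreover have "(\<Inter>g\<in>S. g <# (A \<union> C)) \<subseteq> ?U"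
  proof
    fix x assume x: "x \<in> (\<Inter>g\<in>S. g <# (A \<union> C))"
    let ?SA = "{g \<in> S. x \<in> g <# A}" and ?SC = "{g \<in> S. x \<in> g <# C}"
    have "S = ?SA \<union> ?SC"
    proof
      show "S \<subseteq> ?SA \<union> ?SC"
      proof
        fix g assume "g \<in> S"
        then have "x \<in> g <# (A \<union> C)" using x by blast
        then have "x \<in> g <# A \<or> x \<in> g <# C" unfolding l_coset_def by blast
        then show "g \<in> ?SA \<union> ?SC" using \<open>g \<in> S\<close> by blast
      qed
    qed blast
    then have "card S \<le> card ?SA + card ?SC" by (metis card_Un_le)
    then have "Suc n \<le> card ?SA \<or> Suc m \<le> card ?SC" using S(2) by linarith
    then show "x \<in> ?U"
    proof
      assume "Suc n \<le> card ?SA"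
      then obtain T where "T \<subseteq> ?SA" "card T = Suc n" by (meson obtain_subset_with_card_n)
      then show ?thesis by blast
    next
      assume "Suc m \<le> card ?SC"
      then obtain T where "T \<subseteq> ?SC" "card T = Suc m" by (meson obtain_subset_with_card_n)
      then show ?thesis by blast
    qed
  qed
  ultimately show "finite (\<Inter>g\<in>S. g <# (A \<union> C))" using finite_subset by blast
qed

lemma FT_empty: "{} \<in> FT G"
proof -
  have "n_thin G 0 {}" by (rule thin_of_set) (auto simp: l_coset_def)
  then show ?thesis unfolding FT_def by auto
qed

lemma FT_Un: "A \<in> FT G \<Longrightarrow> C \<in> FT G \<Longrightarrow> A \<union> C \<in> FT G"
  unfolding FT_def using thin_union by blast

lemma FT_subset: "A \<in> FT G \<Longrightarrow> C \<subseteq> A \<Longrightarrow> C \<in> FT G"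
  unfolding FT_def using thin_subset by blast

lemma FT_Union: "finite \<C> \<Longrightarrow> \<C> \<subseteq> FT G \<Longrightarrow> \<Union>\<C> \<in> FT G"
  by (induction rule: finite_induct) (auto simp: FT_empty FT_Un)

end



context group begin

definition fip :: "'a set set \<Rightarrow> bool" where
  "fip U \<longleftrightarrow> (\<forall>S. finite S \<longrightarrow> S \<subseteq> U \<longrightarrow> carrier G \<inter> \<Inter>S \<noteq> {})"

lemma fip_insert_sub:
  assumes "fip U" "A \<in> U" "A \<inter> carrier G \<subseteq> B"
  shows "fip (insert B U)"
  unfolding fip_def
proof (intro allI impI)
  fix S assume S: "finite S" "S \<subseteq> insert B U"
  let ?S = "insert A (S - {B})"
  have "finite ?S" "?S \<subseteq> U" using S assms by auto
  then have "carrier G \<inter> \<Inter>?S \<noteq> {}" using assms(1) unfolding fip_def by blast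
  moreover have "carrier G \<inter> \<Inter>?S \<subseteq> carrier G \<inter> \<Inter>S" using assms(3) by blast
  ultimately show "carrier G \<inter> \<Inter>S \<noteq> {}" by blast
qed

lemma fip_insert_Int:
  assumes "fip U" "A \<in> U" "B \<in> U"
  shows "fip (insert (A \<inter> B) U)"
  unfolding fip_def
proof (intro allI impI)
  fix S assume S: "finite S" "S \<subseteq> insert (A \<inter> B) U"
  let ?S = "insert A (insert B (S - {A \<inter> B}))"
  have "finite ?S" "?S \<subseteq> U" using S assms by auto
  then have "carrier G \<inter> \<Inter>?S \<noteq> {}" using assms(1) unfolding fip_def by blast
  moreover have "carrier G \<inter> \<Inter>?S \<subseteq> carrier G \<inter> \<Inter>S" by blast
  ultimately show "carrier G \<inter> \<Inter>S \<noteq> {}" by blast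
qed

lemma uf_exists:
  assumes base: "\<B> \<subseteq> Pow (carrier G)" "fip \<B>"
  shows "\<exists>p\<in>betaG G. \<B> \<subseteq> p"
proof -
  define \<A> where "\<A> = {U. \<B> \<subseteq> U \<and> U \<subseteq> Pow (carrier G) \<and> fip U}"
  have "\<forall>C\<in>chains \<A>. \<exists>U\<in>\<A>. \<forall>X\<in>C. X \<subseteq> U"
  proof
    fix C assume C: "C \<in> chains \<A>"
    show "\<exists>U\<in>\<A>. \<forall>X\<in>C. X \<subseteq> U"
    proof (cases "C = {}")
      case True
      then show ?thesis using base unfolding \<A>_def by auto
    next
      case False
      have sub: "C \<subseteq> \<A>" using C unfolding chains_def by auto
      have ch: "subset.chain \<A> C" using C unfolding chains_alt_def by auto
      have "\<Union>C \<in> \<A>"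
        unfolding \<A>_def
      proof (intro CollectI conjI)
        show "\<B> \<subseteq> \<Union>C"
        proof -
          obtain U where U: "U \<in> C" using False by blast
          then have "\<B> \<subseteq> U" using sub unfolding \<A>_def by auto
          then show ?thesis using U by blast
        qed
        show "\<Union>C \<subseteq> Pow (carrier G)" using sub unfolding \<A>_def by auto
        show "fip (\<Union>C)"
          unfolding fip_def
        proof (intro allI impI)
          fix S assume S: "finite S" "S \<subseteq> \<Union>C"
          obtain U where "U \<in> C" "S \<subseteq> U"
            using finite_subset_Union_chain[OF S False ch] by blast
          then have "fip U" using sub unfolding \<A>_def by auto
          then show "carrier G \<inter> \<Inter>S \<noteq> {}" using S \<open>S \<subseteq> U\<close> unfolding fip_def by blast
        qed
      qed
      then show ?thesis by blast
    qed
  qed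
  then obtain M where M: "M \<in> \<A>" and max: "\<And>X. X \<in> \<A> \<Longrightarrow> M \<subseteq> X \<Longrightarrow> X = M"
    using Zorn_Lemma2[of \<A>] by auto
  have Mf: "fip M" "M \<subseteq> Pow (carrier G)" "\<B> \<subseteq> M" using M unfolding \<A>_def by auto
  have add: "B \<in> M" if "fip (insert B M)" "B \<subseteq> carrier G" for B
  proof -
    have "insert B M \<in> \<A>" using that Mf unfolding \<A>_def by auto
    then have "insert B M = M" using max by blast
    then show ?thesis by blast
  qed
  have c2: "carrier G \<in> M"
  proof (rule add)
    show "fip (insert (carrier G) M)" unfolding fip_def
    proof (intro allI impI)
      fix S assume S: "finite S" "S \<subseteq> insert (carrier G) M"
      have "finite (S - {carrier G})" "S - {carrier G} \<subseteq> M" using S by auto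
      then have "carrier G \<inter> \<Inter>(S - {carrier G}) \<noteq> {}" using Mf(1) unfolding fip_def by blast
      moreover have "carrier G \<inter> \<Inter>(S - {carrier G}) \<subseteq> carrier G \<inter> \<Inter>S" by blast
      ultimately show "carrier G \<inter> \<Inter>S \<noteq> {}" by blast
    qed
  qed simp
  have c3: "{} \<notin> M"
  proof
    assume "{} \<in> M"
    then have "{{}} \<subseteq> M" by simp
    moreover have "finite {{}}" by simp
    ultimately have "carrier G \<inter> \<Inter>{{}} \<noteq> {}" using Mf(1) unfolding fip_def by blast
    then show False by simp
  qed
  have c4: "\<forall>A B. A \<in> M \<and> B \<in> M \<longrightarrow> A \<inter> B \<in> M"
  proof (intro allI impI)
    fix A B assume AB: "A \<in> M \<and> B \<in> M"
    then have "fip (insert (A \<inter> B) M)" using fip_insert_Int[OF Mf(1), of A B] by blast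
    moreover have "A \<inter> B \<subseteq> carrier G" using AB Mf(2) by auto
    ultimately show "A \<inter> B \<in> M" by (rule add)
  qed
  have c5: "\<forall>A B. A \<in> M \<and> A \<subseteq> B \<and> B \<subseteq> carrier G \<longrightarrow> B \<in> M"
  proof (intro allI impI)
    fix A B assume AB: "A \<in> M \<and> A \<subseteq> B \<and> B \<subseteq> carrier G"
    then have "A \<inter> carrier G \<subseteq> B" by auto
    then have "fip (insert B M)" using fip_insert_sub[OF Mf(1), of A B] AB by blast
    then show "B \<in> M" using add AB by simp
  qed
  have c6: "\<forall>A. A \<subseteq> carrier G \<longrightarrow> A \<in> M \<or> carrier G - A \<in> M"
  proof (intro allI impI)
    fix A assume A: "A \<subseteq> carrier G"
    show "A \<in> M \<or> carrier G - A \<in> M"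
    proof (rule ccontr)
      assume nA: "\<not> (A \<in> M \<or> carrier G - A \<in> M)"
      have n1: "\<not> fip (insert A M)"
      proof
        assume "fip (insert A M)"
        then have "A \<in> M" using add[of A] A by blast
        then show False using nA by blast
      qed
      have n2: "\<not> fip (insert (carrier G - A) M)"
      proof
        assume "fip (insert (carrier G - A) M)"
        then have "carrier G - A \<in> M" using add[of "carrier G - A"] by blast
        then show False using nA by blast
      qed
      have "\<exists>S. finite S \<and> S \<subseteq> insert A M \<and> carrier G \<inter> \<Inter>S = {}"
        using n1 unfolding fip_def by (simp add: not_all)
      then obtain S1 where S1: "finite S1" "S1 \<subseteq> insert A M" "carrier G \<inter> \<Inter>S1 = {}"
        by blast
      have "\<exists>S. finite S \<and> S \<subseteq> insert (carrier G - A) M \<and> carrier G \<inter> \<Inter>S = {}"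
        using n2 unfolding fip_def by (simp add: not_all)
      then obtain S2 where S2: "finite S2" "S2 \<subseteq> insert (carrier G - A) M" "carrier G \<inter> \<Inter>S2 = {}"
        by blast
      define S where "S = (S1 - {A}) \<union> (S2 - {carrier G - A})"
      have "finite S" "S \<subseteq> M" using S1 S2 unfolding S_def by auto
      then have "carrier G \<inter> \<Inter>S \<noteq> {}" using Mf(1) unfolding fip_def by simp
      then obtain x where x: "x \<in> carrier G" "x \<in> \<Inter>S" by blast
      show False
      proof (cases "x \<in> A")
        case True
        have "x \<in> \<Inter>S1"
        proof
          fix s assume "s \<in> S1"
          show "x \<in> s"
          proof (cases "s = A")
            case True then show ?thesis using \<open>x \<in> A\<close> by simp
          next
            case False then have "s \<in> S" unfolding S_def using \<open>s \<in> S1\<close> by simp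
            then show ?thesis using x(2) by simp
          qed
        qed
        then show False using S1(3) x(1) by blast
      next
        case False
        have "x \<in> \<Inter>S2"
        proof
          fix s assume "s \<in> S2"
          show "x \<in> s"
          proof (cases "s = carrier G - A")
            case True then show ?thesis using \<open>x \<notin> A\<close> x(1) by simp
          next
            case False then have "s \<in> S" unfolding S_def using \<open>s \<in> S2\<close> by simp
            then show ?thesis using x(2) by simp
          qed
        qed
        then show False using S2(3) x(1) by blast
      qed
    qed
  qed
  have "M \<in> betaG G" unfolding betaG_def
    by (intro CollectI conjI Mf(2) c2 c3 c4 c5 c6)
  then show ?thesis using Mf(3) by blast
qed

lemma betaG_Int: "p \<in> betaG G \<Longrightarrow> A \<in> p \<Longrightarrow> B \<in> p \<Longrightarrow> A \<inter> B \<in> p"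
  unfolding betaG_def by (simp only: mem_Collect_eq)
lemma betaG_sub: "p \<in> betaG G \<Longrightarrow> A \<in> p \<Longrightarrow> A \<subseteq> carrier G"
  unfolding betaG_def by auto
lemma betaG_ultra: "p \<in> betaG G \<Longrightarrow> A \<subseteq> carrier G \<Longrightarrow> A \<in> p \<or> carrier G - A \<in> p"
  unfolding betaG_def by (simp only: mem_Collect_eq)
lemma freeUF_inf: "p \<in> freeUF G \<Longrightarrow> A \<in> p \<Longrightarrow> infinite A"
  unfolding freeUF_def by auto
lemma freeUF_beta: "p \<in> freeUF G \<Longrightarrow> p \<in> betaG G"
  unfolding freeUF_def by auto

lemma uf_inter:
  assumes p: "p \<in> betaG G" and S: "finite S" "S \<noteq> {}" "S \<subseteq> p"
  shows "\<Inter>S \<in> p"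
  using S
proof (induction rule: finite_ne_induct)
  case (singleton x) then show ?case by simp
next
  case (insert x F)
  then show ?case using betaG_Int[OF p] by simp
qed

lemma thin_not_in_prod:
  assumes p: "p \<in> freeUF G" and q: "q \<in> freeUF G" and C: "n_thin G n C"
  shows "C \<notin> uf_mult G p q"
proof
  assume "C \<in> uf_mult G p q"
  then have Zp: "{g \<in> carrier G. inv g <# C \<in> q} \<in> p" unfolding uf_mult_def by blast
  then have "infinite {g \<in> carrier G. inv g <# C \<in> q}" using p freeUF_inf by blast
  then obtain S where S: "finite S" "card S = Suc n" "S \<subseteq> {g \<in> carrier G. inv g <# C \<in> q}"
    using infinite_arbitrarily_large by blast
  have Sc: "S \<subseteq> carrier G" using S by auto
  have "inj_on (m_inv G) S" using inv_inj Sc inj_on_subset by blast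
  then have "card ((\<lambda>g. inv g) ` S) = Suc n" using S(2) card_image by metis
  moreover have "(\<lambda>g. inv g) ` S \<subseteq> carrier G" using Sc by auto
  ultimately have fin: "finite (\<Inter>g\<in>(\<lambda>g. inv g) ` S. g <# C)" using thin_set[OF C] by blast
  have qb: "q \<in> betaG G" using q freeUF_beta by blast
  have "(\<lambda>g. inv g <# C) ` S \<subseteq> q" using S(3) by blast
  moreover have "S \<noteq> {}" using S(2) by auto
  ultimately have "\<Inter>((\<lambda>g. inv g <# C) ` S) \<in> q"
    using uf_inter[OF qb, of "(\<lambda>g. inv g <# C) ` S"] S(1) by blast
  moreover have "\<Inter>((\<lambda>g. inv g <# C) ` S) = (\<Inter>g\<in>(\<lambda>g. inv g) ` S. g <# C)" by (simp add: image_image)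
  ultimately show False using fin freeUF_inf[OF q] by metis
qed

lemma SpD:
  assumes "B \<in> Sp G" "X \<subseteq> carrier G" "infinite X"
  shows "\<exists>F. F \<subseteq> X \<and> finite F \<and> F \<noteq> {} \<and> finite (\<Inter>g\<in>F. g <# B)"
proof -
  have "\<forall>X. X \<subseteq> carrier G \<and> infinite X \<longrightarrow>
        (\<exists>F. F \<subseteq> X \<and> finite F \<and> F \<noteq> {} \<and> finite (\<Inter>g\<in>F. g <# B))"
    using assms(1) unfolding Sp_def mem_Collect_eq by (elim conjE)
  then show ?thesis using assms(2,3) by blast
qed

lemma sparse_not_in_prod:
  assumes p: "p \<in> freeUF G" and q: "q \<in> freeUF G" and B: "B \<in> Sp G"
  shows "B \<notin> uf_mult G p q"
proof
  assume "B \<in> uf_mult G p q"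
  then have Zp: "{g \<in> carrier G. inv g <# B \<in> q} \<in> p" unfolding uf_mult_def by blast
  then have inf: "infinite {g \<in> carrier G. inv g <# B \<in> q}" using p freeUF_inf by blast
  define Z where "Z = {g \<in> carrier G. inv g <# B \<in> q}"
  have Zc: "Z \<subseteq> carrier G" unfolding Z_def by blast
  then have "inj_on (\<lambda>g. inv g) Z" using inv_inj inj_on_subset by blast
  then have i1: "infinite ((\<lambda>g. inv g) ` Z)" using inf finite_image_iff unfolding Z_def by blast
  have i2: "(\<lambda>g. inv g) ` Z \<subseteq> carrier G" using Zc by auto
  have "\<exists>F. F \<subseteq> (\<lambda>g. inv g) ` Z \<and> finite F \<and> F \<noteq> {} \<and> finite (\<Inter>g\<in>F. g <# B)"
    by (rule SpD[OF B i2 i1])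
  then obtain F where F: "F \<subseteq> (\<lambda>g. inv g) ` Z" "finite F" "F \<noteq> {}" "finite (\<Inter>g\<in>F. g <# B)"
    by blast
  have qb: "q \<in> betaG G" using q freeUF_beta by blast
  have "(\<lambda>g. g <# B) ` F \<subseteq> q"
  proof
    fix X assume "X \<in> (\<lambda>g. g <# B) ` F"
    then obtain h where "h \<in> Z" "X = inv h <# B" using F(1) by blast
    then show "X \<in> q" unfolding Z_def by simp
  qed
  then have "(\<Inter>g\<in>F. g <# B) \<in> q" using uf_inter[OF qb, of "(\<lambda>g. g <# B) ` F"] F(2,3) by blast
  then show False using F(4) freeUF_inf[OF q] by blast
qed

end



primrec hist :: "((nat \<Rightarrow> 'b) \<Rightarrow> nat \<Rightarrow> 'b \<Rightarrow> bool) \<Rightarrow> nat \<Rightarrow> 'b list" where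
  "hist P 0 = []"
| "hist P (Suc n) = hist P n @ [SOME y. P (\<lambda>m. hist P n ! m) n y]"

lemma hist_length: "length (hist P n) = n"
  by (induction n) auto

lemma hist_prefix: "k < n \<Longrightarrow> hist P n ! k = hist P (Suc k) ! k"
proof (induction n)
  case 0 then show ?case by simp
next
  case (Suc n)
  show ?case
  proof (cases "k < n")
    case True
    then have "hist P (Suc n) ! k = hist P n ! k" by (simp add: nth_append hist_length)
    then show ?thesis using Suc True by simp
  next
    case False
    then have "k = n" using Suc.prems by simp
    then show ?thesis by simp
  qed
qed

lemma dep_choice:
  fixes P :: "(nat \<Rightarrow> 'b) \<Rightarrow> nat \<Rightarrow> 'b \<Rightarrow> bool"
  assumes ex: "\<And>f n. (\<And>m. m < n \<Longrightarrow> P f m (f m)) \<Longrightarrow> \<exists>y. P f n y"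
    and loc: "\<And>f f' n y. (\<And>m. m < n \<Longrightarrow> f m = f' m) \<Longrightarrow> P f n y \<Longrightarrow> P f' n y"
  shows "\<exists>g. \<forall>n. P g n (g n)"
proof -
  define g where "g k = hist P (Suc k) ! k" for k
  have agree: "hist P n ! m = g m" if "m < n" for n m using hist_prefix[OF that] unfolding g_def by simp
  have "P g n (g n)" for n
  proof (induction n rule: less_induct)
    case (less n)
    define f where "f = (\<lambda>m. hist P n ! m)"
    have fg: "f m = g m" if "m < n" for m using agree[OF that] unfolding f_def by simp
    have "P f m (f m)" if "m < n" for m
    proof -
      have "P g m (g m)" using less that by blast
      then have "P f m (g m)" using loc[of m g f "g m"] fg that by simp
      then show ?thesis using fg that by simp
    qed
    then have "\<exists>y. P f n y" using ex by blast
    then have "P f n (SOME y. P f n y)" by (rule someI_ex)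
    moreover have "(SOME y. P f n y) = g n" unfolding g_def f_def by (simp add: nth_append hist_length)
    ultimately have "P f n (g n)" by simp
    then show ?case using loc[of n f g "g n"] fg by simp
  qed
  then show ?thesis by blast
qed

context group begin

lemma solve1: "u \<in> carrier G \<Longrightarrow> v \<in> carrier G \<Longrightarrow> u \<otimes> inv v = w \<Longrightarrow> u = w \<otimes> v"
  by (auto simp: m_assoc)

lemma solve2: "a \<in> carrier G \<Longrightarrow> y \<in> carrier G \<Longrightarrow> a \<otimes> y = z \<Longrightarrow> y = inv a \<otimes> z"
  by (auto simp: m_assoc[symmetric])

lemma canc1 [simp]: "x \<in> carrier G \<Longrightarrow> g \<in> carrier G \<Longrightarrow> x \<otimes> (inv x \<otimes> g) = g"
  by (simp add: m_assoc[symmetric])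
lemma canc2 [simp]: "x \<in> carrier G \<Longrightarrow> g \<in> carrier G \<Longrightarrow> inv x \<otimes> (x \<otimes> g) = g"
  by (simp add: m_assoc[symmetric])

lemma alg1: "h \<in> carrier G \<Longrightarrow> g \<in> carrier G \<Longrightarrow> x \<in> carrier G \<Longrightarrow>
   (inv h \<otimes> x) \<otimes> inv (inv g \<otimes> x) = inv h \<otimes> g"
  by (simp add: m_assoc inv_mult_group)

lemma alg2: "g1 \<in> carrier G \<Longrightarrow> g2 \<in> carrier G \<Longrightarrow> x \<in> carrier G \<Longrightarrow> z \<in> carrier G \<Longrightarrow>
   ((inv g2 \<otimes> x) \<otimes> inv z) \<otimes> inv ((inv g1 \<otimes> x) \<otimes> inv z) = inv g2 \<otimes> g1"
  by (simp add: m_assoc inv_mult_group)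

lemma alg3: "g \<in> carrier G \<Longrightarrow> h \<in> carrier G \<Longrightarrow> x \<in> carrier G \<Longrightarrow> z \<in> carrier G \<Longrightarrow>
   (inv g \<otimes> x) \<otimes> inv z = (inv h \<otimes> x) \<otimes> inv z \<Longrightarrow> g = h"
proof -
  assume A: "g \<in> carrier G" "h \<in> carrier G" "x \<in> carrier G" "z \<in> carrier G"
    "(inv g \<otimes> x) \<otimes> inv z = (inv h \<otimes> x) \<otimes> inv z"
  then have "inv g \<otimes> x = inv h \<otimes> x" using right_cancel by simp
  then have "inv g = inv h" using right_cancel A by simp
  then show "g = h" using A inv_inj unfolding inj_on_def by blast
qed

lemma alg4: "g \<in> carrier G \<Longrightarrow> a \<in> carrier G \<Longrightarrow> x \<in> carrier G \<Longrightarrow> z \<in> carrier G \<Longrightarrow>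
   inv g \<otimes> x = a \<otimes> z \<Longrightarrow> a = (inv g \<otimes> x) \<otimes> inv z"
  by (simp add: m_assoc)

end



context group begin

definition Dset :: "'a set \<Rightarrow> 'a set" where
  "Dset L = {a \<otimes> inv b | a b. a \<in> L \<and> b \<in> L \<and> a \<noteq> b}"

lemma Dset_finite: "finite L \<Longrightarrow> finite (Dset L)"
proof -
  assume "finite L"
  have "Dset L \<subseteq> (\<lambda>(a, b). a \<otimes> inv b) ` (L \<times> L)" unfolding Dset_def by auto
  then show ?thesis using \<open>finite L\<close> finite_subset by blast
qed

lemma avoid:
  assumes "infinite (carrier G)" "finite E"
  obtains c where "c \<in> carrier G" "c \<notin> E"
proof -
  have "carrier G - E \<noteq> {}" using assms finite_subset by (metis Diff_eq_empty_iff)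
  then show ?thesis using that by blast
qed

lemma shape_exists:
  assumes inf: "infinite (carrier G)" and E: "finite E"
  shows "\<exists>L. L \<subseteq> carrier G \<and> finite L \<and> card L = k \<and> Dset L \<inter> E = {}"
proof (induction k)
  case 0
  have "Dset {} = {}" unfolding Dset_def by auto
  then show ?case by (intro exI[of _ "{}"]) auto
next
  case (Suc k)
  then obtain L where L: "L \<subseteq> carrier G" "finite L" "card L = k" "Dset L \<inter> E = {}" by blast
  define Ex where "Ex = L \<union> (\<lambda>(t, b). t \<otimes> b) ` ((E \<inter> carrier G) \<times> L)
                      \<union> (\<lambda>(t, b). inv t \<otimes> b) ` ((E \<inter> carrier G) \<times> L)"
  have "finite Ex" unfolding Ex_def using L(2) E by auto
  then obtain c where c: "c \<in> carrier G" "c \<notin> Ex" using avoid[OF inf] by blast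
  have cL: "c \<notin> L" using c unfolding Ex_def by blast
  have "Dset (insert c L) \<inter> E = {}"
  proof (rule ccontr)
    assume "Dset (insert c L) \<inter> E \<noteq> {}"
    then obtain a b where ab: "a \<in> insert c L" "b \<in> insert c L" "a \<noteq> b" "a \<otimes> inv b \<in> E"
      unfolding Dset_def by blast
    have ac: "a \<in> carrier G" "b \<in> carrier G" using ab L(1) c(1) by auto
    define t where "t = a \<otimes> inv b"
    have tc: "t \<in> carrier G" "t \<in> E" using ac ab unfolding t_def by auto
    show False
    proof (cases "a = c")
      case True
      then have "b \<in> L" using ab by auto
      have "c = t \<otimes> b" using solve1[OF ac, of t] True unfolding t_def by simp
      then have "c \<in> Ex" unfolding Ex_def using tc \<open>b \<in> L\<close> by blast
      then show False using c by blast
    next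
      case False
      then have aL: "a \<in> L" using ab by auto
      show False
      proof (cases "b = c")
        case True
        have "a = t \<otimes> c" using solve1[OF ac, of t] True unfolding t_def by simp
        then have "c = inv t \<otimes> a" using solve2[OF tc(1) c(1)] by simp
        moreover have "(t, a) \<in> (E \<inter> carrier G) \<times> L" using tc aL by blast
        ultimately have "c \<in> (\<lambda>(t, b). inv t \<otimes> b) ` ((E \<inter> carrier G) \<times> L)"
          by (simp add: image_iff) blast
        then have "c \<in> Ex" unfolding Ex_def by blast
        then show False using c by blast
      next
        case False
        then have "b \<in> L" using ab by auto
        then have "a \<otimes> inv b \<in> Dset L" unfolding Dset_def using aL ab(3) by blast
        then show False using L(4) ab(4) by blast
      qed
    qed
  qed
  moreover have "card (insert c L) = Suc k" using L cL by simp
  ultimately show ?case using L c by (intro exI[of _ "insert c L"]) auto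
qed

lemma shapes_exist:
  assumes inf: "infinite (carrier G)"
  shows "\<exists>Lf. \<forall>n. Lf n \<subseteq> carrier G \<and> finite (Lf n) \<and> card (Lf n) = Suc n \<and>
             Dset (Lf n) \<inter> (\<Union>m<n. Dset (Lf m)) = {}"
proof -
  let ?P = "\<lambda>f n y. y \<subseteq> carrier G \<and> finite y \<and> card y = Suc n \<and> Dset y \<inter> (\<Union>m<n. Dset (f m)) = {}"
  have "\<exists>g. \<forall>n. ?P g n (g n)"
  proof (rule dep_choice)
    fix f :: "nat \<Rightarrow> 'a set" and n
    assume prev: "\<And>m. m < n \<Longrightarrow> ?P f m (f m)"
    have "finite (\<Union>m<n. Dset (f m))" using prev Dset_finite by auto
    then show "\<exists>y. ?P f n y" using shape_exists[OF inf] by blast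
  next
    fix f f' :: "nat \<Rightarrow> 'a set" and n y
    assume "\<And>m. m < n \<Longrightarrow> f m = f' m" "?P f n y"
    then show "?P f' n y" by auto
  qed
  then show ?thesis by blast
qed

end



definition nn :: "nat \<Rightarrow> nat" where "nn j = fst (prod_decode j)"

lemma nn_infinite: "infinite {j. nn j = n}"
proof -
  have "inj (\<lambda>k. prod_encode (n, k))" unfolding inj_def by (simp add: prod_encode_eq)
  then have "infinite (range (\<lambda>k. prod_encode (n, k)))" using finite_imageD by blast
  moreover have "range (\<lambda>k. prod_encode (n, k)) \<subseteq> {j. nn j = n}" unfolding nn_def by auto
  ultimately show ?thesis using finite_subset by blast
qed

context group begin

definition Pc :: "(nat \<Rightarrow> 'a set) \<Rightarrow> (nat \<Rightarrow> 'a) \<Rightarrow> nat \<Rightarrow> 'a set" where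
  "Pc Lf f j = (\<lambda>a. a \<otimes> f j) ` Lf (nn j)"

definition SS :: "(nat \<Rightarrow> 'a set) \<Rightarrow> (nat \<Rightarrow> 'a) \<Rightarrow> nat \<Rightarrow> nat \<Rightarrow> 'a set" where
  "SS Lf f i j = {a \<otimes> inv b | a b. a \<in> Pc Lf f i \<and> b \<in> Pc Lf f j}"

definition Tx :: "(nat \<Rightarrow> 'a set) \<Rightarrow> (nat \<Rightarrow> 'a) \<Rightarrow> nat \<Rightarrow> 'a set" where
  "Tx Lf f k = (\<Union>i<k. SS Lf f k i \<union> SS Lf f i k)"

lemma Tx_cong:
  assumes "\<And>i. i \<le> k \<Longrightarrow> f i = f' i"
  shows "Tx Lf f k = Tx Lf f' k"
proof -
  have P: "Pc Lf f i = Pc Lf f' i" if "i \<le> k" for i unfolding Pc_def using assms that by simp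
  have "SS Lf f k i = SS Lf f' k i" "SS Lf f i k = SS Lf f' i k" if "i < k" for i
    unfolding SS_def using P that by auto
  then show ?thesis unfolding Tx_def by auto
qed

lemma SS_finite: "finite (Lf (nn i)) \<Longrightarrow> finite (Lf (nn j)) \<Longrightarrow> finite (SS Lf f i j)"
proof -
  assume "finite (Lf (nn i))" "finite (Lf (nn j))"
  then have "finite (Pc Lf f i)" "finite (Pc Lf f j)" unfolding Pc_def by auto
  moreover have "SS Lf f i j \<subseteq> (\<lambda>(a, b). a \<otimes> inv b) ` (Pc Lf f i \<times> Pc Lf f j)"
    unfolding SS_def by auto
  ultimately show ?thesis using finite_subset by blast
qed

lemma Tx_finite: "(\<And>n. finite (Lf n)) \<Longrightarrow> finite (Tx Lf f k)"
  unfolding Tx_def using SS_finite by auto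

lemma Pc_carrier: "Lf (nn i) \<subseteq> carrier G \<Longrightarrow> f i \<in> carrier G \<Longrightarrow> Pc Lf f i \<subseteq> carrier G"
  unfolding Pc_def by auto

lemma SS_carrier: "Pc Lf f i \<subseteq> carrier G \<Longrightarrow> Pc Lf f j \<subseteq> carrier G \<Longrightarrow> SS Lf f i j \<subseteq> carrier G"
  unfolding SS_def by auto

lemma x_exists:
  assumes inf: "infinite (carrier G)" and Lc: "\<And>n. Lf n \<subseteq> carrier G" and Lfin: "\<And>n. finite (Lf n)"
  shows "\<exists>x. \<forall>j. x j \<in> carrier G \<and> (\<forall>i<j. x j \<noteq> x i) \<and>
                 Tx Lf (x(j := x j)) j \<inter> (\<Union>k<j. Tx Lf x k) = {}"
proof -
  let ?Q = "\<lambda>f j y. y \<in> carrier G \<and> (\<forall>i<j. y \<noteq> f i) \<and>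
                 Tx Lf (f(j := y)) j \<inter> (\<Union>k<j. Tx Lf f k) = {}"
  show ?thesis
  proof (rule dep_choice)
    fix f f' :: "nat \<Rightarrow> 'a" and j y
    assume ag: "\<And>m. m < j \<Longrightarrow> f m = f' m" and Q: "?Q f j y"
    have "Tx Lf (f(j := y)) j = Tx Lf (f'(j := y)) j" by (rule Tx_cong) (use ag in auto)
    moreover have "(\<Union>k<j. Tx Lf f k) = (\<Union>k<j. Tx Lf f' k)"
    proof -
      have "Tx Lf f k = Tx Lf f' k" if "k < j" for k by (rule Tx_cong) (use ag that in auto)
      then show ?thesis by auto
    qed
    ultimately show "?Q f' j y" using Q ag by auto
  next
    fix f :: "nat \<Rightarrow> 'a" and j
    assume prev: "\<And>m. m < j \<Longrightarrow> ?Q f m (f m)"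
    have fc: "f i \<in> carrier G" if "i < j" for i using prev[OF that] by blast
    define Tp where "Tp = (\<Union>k<j. Tx Lf f k)"
    have Tpf: "finite Tp" unfolding Tp_def using Tx_finite Lfin by auto
    have Tpc: "Tp \<subseteq> carrier G"
    proof
      fix w assume "w \<in> Tp"
      then obtain k i where ki: "k < j" "i < k" "w \<in> SS Lf f k i \<union> SS Lf f i k"
        unfolding Tp_def Tx_def by blast
      have "Pc Lf f k \<subseteq> carrier G" "Pc Lf f i \<subseteq> carrier G"
        using Pc_carrier Lc fc ki by auto
      then show "w \<in> carrier G" using SS_carrier ki by blast
    qed
    define E where "E = f ` {..<j} \<union> (\<Union>i<j. \<Union>a\<in>Lf (nn j). \<Union>b\<in>Lf (nn i). \<Union>t\<in>Tp.
        {inv a \<otimes> (t \<otimes> (b \<otimes> f i)), inv a \<otimes> (inv t \<otimes> (b \<otimes> f i))})"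
    have "finite E" unfolding E_def using Tpf Lfin by auto
    then obtain y where y: "y \<in> carrier G" "y \<notin> E" using avoid[OF inf] by blast
    have "Tx Lf (f(j := y)) j \<inter> Tp = {}"
    proof (rule ccontr)
      assume "Tx Lf (f(j := y)) j \<inter> Tp \<noteq> {}"
      then obtain w i where wi: "i < j" "w \<in> Tp"
        "w \<in> SS Lf (f(j := y)) j i \<union> SS Lf (f(j := y)) i j"
        unfolding Tx_def by blast
      have wc: "w \<in> carrier G" using wi Tpc by blast
      have Pj: "Pc Lf (f(j := y)) j = (\<lambda>a. a \<otimes> y) ` Lf (nn j)" unfolding Pc_def by simp
      have Pi: "Pc Lf (f(j := y)) i = (\<lambda>b. b \<otimes> f i) ` Lf (nn i)" unfolding Pc_def using wi by simp
      have fic: "f i \<in> carrier G" using fc wi by blast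
      show False
      proof (cases "w \<in> SS Lf (f(j := y)) j i")
        case True
        then obtain a b where ab: "a \<in> Lf (nn j)" "b \<in> Lf (nn i)" "w = (a \<otimes> y) \<otimes> inv (b \<otimes> f i)"
          unfolding SS_def Pj Pi by blast
        have ac: "a \<in> carrier G" "b \<in> carrier G" using ab Lc by auto
        have "a \<otimes> y = w \<otimes> (b \<otimes> f i)" using solve1[of "a \<otimes> y" "b \<otimes> f i" w] ab ac y fic by simp
        then have "y = inv a \<otimes> (w \<otimes> (b \<otimes> f i))" using solve2[OF ac(1) y(1)] by simp
        then have "y \<in> E" unfolding E_def using wi ab by blast
        then show False using y by blast
      next
        case False
        then have "w \<in> SS Lf (f(j := y)) i j" using wi by blast
        then obtain a b where ab: "a \<in> Lf (nn j)" "b \<in> Lf (nn i)" "w = (b \<otimes> f i) \<otimes> inv (a \<otimes> y)"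
          unfolding SS_def Pj Pi by blast
        have ac: "a \<in> carrier G" "b \<in> carrier G" using ab Lc by auto
        have "b \<otimes> f i = w \<otimes> (a \<otimes> y)" using solve1[of "b \<otimes> f i" "a \<otimes> y" w] ab ac y fic by simp
        then have "a \<otimes> y = inv w \<otimes> (b \<otimes> f i)" using solve2[OF wc, of "a \<otimes> y"] ac y by simp
        then have "y = inv a \<otimes> (inv w \<otimes> (b \<otimes> f i))" using solve2[OF ac(1) y(1)] by simp
        then have "y \<in> E" unfolding E_def using wi ab by blast
        then show False using y by blast
      qed
    qed
    moreover have "\<forall>i<j. y \<noteq> f i" using y unfolding E_def by blast
    ultimately show "\<exists>y. ?Q f j y" using y unfolding Tp_def by blast
  qed
qed

end



context group begin

lemma lcoset_finite: "finite H \<Longrightarrow> finite (g <# H)"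
  unfolding l_coset_def by auto

lemma SS_in_Tx: "p \<noteq> q \<Longrightarrow> w \<in> SS Lf f p q \<Longrightarrow> w \<in> Tx Lf f (max p q)"
proof -
  assume pq: "p \<noteq> q" and w: "w \<in> SS Lf f p q"
  show ?thesis
  proof (cases "p < q")
    case True
    then have m: "max p q = q" by simp
    have "w \<in> SS Lf f p q \<union> SS Lf f q p" using w by blast
    then have "w \<in> (\<Union>i<q. SS Lf f q i \<union> SS Lf f i q)" using True by blast
    then show ?thesis unfolding Tx_def m .
  next
    case False
    then have "q < p" using pq by auto
    then have m: "max p q = p" by simp
    have "w \<in> SS Lf f p q \<union> SS Lf f q p" using w by blast
    then have "w \<in> (\<Union>i<p. SS Lf f p i \<union> SS Lf f i p)" using \<open>q < p\<close> by blast
    then show ?thesis unfolding Tx_def m .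
  qed
qed

lemma sparse_part:
  assumes Lc: "\<And>n. Lf n \<subseteq> carrier G" and Lcard: "\<And>n. card (Lf n) = Suc n"
    and Lfin: "\<And>n. finite (Lf n)"
    and Duniq: "\<And>u n m. u \<in> Dset (Lf n) \<Longrightarrow> u \<in> Dset (Lf m) \<Longrightarrow> n = m"
    and xc: "\<And>j. x j \<in> carrier G"
    and Tuniq: "\<And>w k1 k2. w \<in> Tx Lf x k1 \<Longrightarrow> w \<in> Tx Lf x k2 \<Longrightarrow> k1 = k2"
    and X: "X \<subseteq> carrier G" "infinite X"
  shows "\<exists>F. F \<subseteq> X \<and> finite F \<and> F \<noteq> {} \<and> finite (\<Inter>g\<in>F. g <# (\<Union>j. Pc Lf x j))"
proof -
  define B where "B = (\<Union>j. Pc Lf x j)"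
  have Pcc: "Pc Lf x j \<subseteq> carrier G" for j using Pc_carrier Lc xc by blast
  have Bc: "B \<subseteq> carrier G" unfolding B_def using Pcc by blast
  have Pcf: "finite (Pc Lf x j)" for j unfolding Pc_def using Lfin by simp
  have "X \<noteq> {}" using X(2) by auto
  then obtain g1 where g1: "g1 \<in> X" by blast
  have "infinite (X - {g1})" using X(2) by simp
  then have "X - {g1} \<noteq> {}" by (intro notI) simp
  then obtain g2 where g2: "g2 \<in> X" "g2 \<noteq> g1" by blast
  define u where "u = inv g2 \<otimes> g1"
  define N0 where "N0 = (if \<exists>n. u \<in> Dset (Lf n) then (THE n. u \<in> Dset (Lf n)) else 0)"
  have N0: "N0 = n" if "u \<in> Dset (Lf n)" for n
  proof -
    have "(THE n. u \<in> Dset (Lf n)) = n"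
      by (rule the_equality[of "\<lambda>n. u \<in> Dset (Lf n)" n, OF that]) (rule Duniq[OF _ that])
    then show ?thesis unfolding N0_def using that by auto
  qed
  have "infinite (X - {g1, g2})" using X(2) by simp
  then obtain F0 where F0: "finite F0" "card F0 = N0" "F0 \<subseteq> X - {g1, g2}"
    using infinite_arbitrarily_large by blast
  define F where "F = insert g1 (insert g2 F0)"
  have Ffin: "finite F" unfolding F_def using F0 by simp
  have FX: "F \<subseteq> X" unfolding F_def using F0 g1 g2 by blast
  have Fc: "F \<subseteq> carrier G" using FX X by blast
  have Fcard: "card F = Suc (Suc N0)"
  proof -
    have "g2 \<notin> F0" "g1 \<notin> F0" using F0(3) by auto
    then have "g1 \<notin> insert g2 F0" using g2(2) by auto
    then have "card F = Suc (card (insert g2 F0))" unfolding F_def using F0(1) by simp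
    also have "\<dots> = Suc (Suc (card F0))" using \<open>g2 \<notin> F0\<close> F0(1) by simp
    finally show ?thesis using F0(2) by simp
  qed
  define I where "I w = {i. \<exists>j. i \<noteq> j \<and> w \<in> SS Lf x j i}" for w
  have Ifin: "finite (I w)" for w
  proof (cases "I w = {}")
    case True then show ?thesis by simp
  next
    case False
    then obtain i0 j0 where ij0: "i0 \<noteq> j0" "w \<in> SS Lf x j0 i0" unfolding I_def by blast
    then have K: "w \<in> Tx Lf x (max j0 i0)" using SS_in_Tx[of j0 i0 w Lf x] by simp
    have "I w \<subseteq> {..max j0 i0}"
    proof
      fix i assume "i \<in> I w"
      then obtain j where "i \<noteq> j" "w \<in> SS Lf x j i" unfolding I_def by blast
      then have "w \<in> Tx Lf x (max j i)" using SS_in_Tx[of j i w Lf x] by simp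
      then have "max j i = max j0 i0" using Tuniq K by blast
      then show "i \<in> {..max j0 i0}" using max.cobounded2[of i j] by simp
    qed
    then show ?thesis using finite_subset by blast
  qed
  define Fin where "Fin = (\<Union>g\<in>F. \<Union>h\<in>F. \<Union>i\<in>I (inv h \<otimes> g). g <# Pc Lf x i)"
  have "finite Fin" unfolding Fin_def by (intro finite_UN_I Ffin Ifin lcoset_finite Pcf)
  moreover have "(\<Inter>g\<in>F. g <# B) \<subseteq> Fin"
  proof
    fix y assume y: "y \<in> (\<Inter>g\<in>F. g <# B)"
    have mem: "y \<in> carrier G \<and> inv g \<otimes> y \<in> B" if "g \<in> F" for g
    proof -
      have "y \<in> g <# B" using y that by blast
      moreover have "g \<in> carrier G" using that Fc by blast
      ultimately show ?thesis using lcoset_mem[of g B y] Bc by blast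
    qed
    have g1F: "g1 \<in> F" "g2 \<in> F" unfolding F_def by auto
    have yc: "y \<in> carrier G" using mem g1F by blast
    show "y \<in> Fin"
    proof (cases "\<exists>g h i j. g \<in> F \<and> h \<in> F \<and> inv g \<otimes> y \<in> Pc Lf x i \<and> inv h \<otimes> y \<in> Pc Lf x j \<and> i \<noteq> j")
      case True
      then obtain g h i j where ghij: "g \<in> F" "h \<in> F" "inv g \<otimes> y \<in> Pc Lf x i"
        "inv h \<otimes> y \<in> Pc Lf x j" "i \<noteq> j" by blast
      have gc: "g \<in> carrier G" "h \<in> carrier G" using ghij Fc by auto
      have "(inv h \<otimes> y) \<otimes> inv (inv g \<otimes> y) \<in> SS Lf x j i" unfolding SS_def using ghij by blast
      then have "inv h \<otimes> g \<in> SS Lf x j i" using alg1[OF gc(2) gc(1) yc] by simp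
      then have iI: "i \<in> I (inv h \<otimes> g)" unfolding I_def using ghij(5) by blast
      have "y \<in> g <# Pc Lf x i" using lcoset_mem[OF gc(1) Pcc] yc ghij(3) by blast
      then show ?thesis unfolding Fin_def using ghij(1,2) iI by blast
    next
      case False
      obtain j where j: "inv g1 \<otimes> y \<in> Pc Lf x j" using mem[OF g1F(1)] unfolding B_def by blast
      have allj: "inv g \<otimes> y \<in> Pc Lf x j" if gF: "g \<in> F" for g
      proof -
        obtain i where i: "inv g \<otimes> y \<in> Pc Lf x i" using mem[OF gF] unfolding B_def by blast
        show ?thesis
        proof (cases "i = j")
          case True then show ?thesis using i by simp
        next
          case ne: False
          then have "\<exists>g h i j. g \<in> F \<and> h \<in> F \<and> inv g \<otimes> y \<in> Pc Lf x i \<and> inv h \<otimes> y \<in> Pc Lf x j \<and> i \<noteq> j"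
            using i j gF g1F by blast
          then show ?thesis using False by blast
        qed
      qed
      define \<phi> where "\<phi> g = (inv g \<otimes> y) \<otimes> inv (x j)" for g
      have phiL: "\<phi> g \<in> Lf (nn j)" if gF: "g \<in> F" for g
      proof -
        obtain a where a: "a \<in> Lf (nn j)" "inv g \<otimes> y = a \<otimes> x j"
          using allj[OF gF] unfolding Pc_def by blast
        have "g \<in> carrier G" "a \<in> carrier G" using gF Fc a(1) Lc by auto
        then have "a = \<phi> g" unfolding \<phi>_def using alg4[of g a y "x j"] a(2) yc xc by blast
        then show ?thesis using a by simp
      qed
      have phiinj: "inj_on \<phi> F"
      proof (rule inj_onI)
        fix g h assume gh: "g \<in> F" "h \<in> F" "\<phi> g = \<phi> h"
        then have "g \<in> carrier G" "h \<in> carrier G" using Fc by auto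
        then show "g = h" using alg3[of g h y "x j"] gh(3) yc xc unfolding \<phi>_def by blast
      qed
      have "card F \<le> card (Lf (nn j))"
        using card_inj_on_le[OF phiinj _ Lfin] phiL by blast
      then have le: "card F \<le> Suc (nn j)" using Lcard by simp
      have g12c: "g1 \<in> carrier G" "g2 \<in> carrier G" using g1F Fc by auto
      have "u = \<phi> g2 \<otimes> inv (\<phi> g1)" unfolding u_def \<phi>_def using alg2[OF g12c yc xc] by simp
      moreover have "\<phi> g2 \<noteq> \<phi> g1" using phiinj g1F g2(2) unfolding inj_on_def by blast
      ultimately have "u \<in> Dset (Lf (nn j))" unfolding Dset_def using phiL g1F by blast
      then have "N0 = nn j" by (rule N0)
      then show ?thesis using le Fcard by simp
    qed
  qed
  ultimately have fB: "finite (\<Inter>g\<in>F. g <# B)" using finite_subset by blast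
  then have "finite (\<Inter>g\<in>F. g <# (\<Union>j. Pc Lf x j))" unfolding B_def .
  moreover have "F \<noteq> {}" unfolding F_def by simp
  ultimately show ?thesis using FX Ffin by blast
qed

end



context group begin

lemma exists_sparse_not_FT:
  assumes inf: "infinite (carrier G)"
  shows "\<exists>B. B \<in> Sp G \<and> B \<notin> FT G"
proof -
  obtain Lf where Lf: "\<And>n. Lf n \<subseteq> carrier G \<and> finite (Lf n) \<and> card (Lf n) = Suc n \<and>
             Dset (Lf n) \<inter> (\<Union>m<n. Dset (Lf m)) = {}"
    using shapes_exist[OF inf] by blast
  have Lc: "\<And>n. Lf n \<subseteq> carrier G" and Lfin: "\<And>n. finite (Lf n)"
    and Lcard: "\<And>n. card (Lf n) = Suc n" using Lf by auto
  have Duniq: "n = m" if "u \<in> Dset (Lf n)" "u \<in> Dset (Lf m)" for u n m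
  proof (rule ccontr)
    assume "n \<noteq> m"
    then have "n < m \<or> m < n" by auto
    then show False
    proof
      assume "n < m"
      then have "u \<in> Dset (Lf m) \<inter> (\<Union>k<m. Dset (Lf k))" using that by blast
      then show False using Lf[of m] by blast
    next
      assume "m < n"
      then have "u \<in> Dset (Lf n) \<inter> (\<Union>k<n. Dset (Lf k))" using that by blast
      then show False using Lf[of n] by blast
    qed
  qed
  obtain x where x: "\<forall>j. x j \<in> carrier G \<and> (\<forall>i<j. x j \<noteq> x i) \<and>
                 Tx Lf (x(j := x j)) j \<inter> (\<Union>k<j. Tx Lf x k) = {}"
    using x_exists[where Lf=Lf, OF inf Lc Lfin] by (elim exE)
  have xc: "\<And>j. x j \<in> carrier G" using x by simp
  have xne: "\<And>j k. k < j \<Longrightarrow> x j \<noteq> x k" using x by simp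
  have Tdisj: "Tx Lf x j \<inter> (\<Union>k<j. Tx Lf x k) = {}" for j
  proof -
    have "Tx Lf (x(j := x j)) j \<inter> (\<Union>k<j. Tx Lf x k) = {}" using spec[OF x, of j] by (elim conjE)
    then show ?thesis by (simp only: fun_upd_triv)
  qed
  have Tuniq: "k1 = k2" if "w \<in> Tx Lf x k1" "w \<in> Tx Lf x k2" for w k1 k2
  proof (rule ccontr)
    assume "k1 \<noteq> k2"
    then have "k1 < k2 \<or> k2 < k1" by auto
    then show False
    proof
      assume "k1 < k2"
      then have "w \<in> Tx Lf x k2 \<inter> (\<Union>k<k2. Tx Lf x k)" using that by blast
      then show False using Tdisj[of k2] by blast
    next
      assume "k2 < k1"
      then have "w \<in> Tx Lf x k1 \<inter> (\<Union>k<k1. Tx Lf x k)" using that by blast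
      then show False using Tdisj[of k1] by blast
    qed
  qed
  have xinj: "inj x"
  proof (rule injI)
    fix i j assume "x i = x j"
    show "i = j"
    proof (rule ccontr)
      assume "i \<noteq> j"
      then have "i < j \<or> j < i" by auto
      then show False using xne \<open>x i = x j\<close> by metis
    qed
  qed
  define B where "B = (\<Union>j. Pc Lf x j)"
  have Pcc: "Pc Lf x j \<subseteq> carrier G" for j by (rule Pc_carrier[OF Lc xc])
  have Bc: "B \<subseteq> carrier G" unfolding B_def using Pcc by blast
  have sp: "B \<in> Sp G"
  proof -
    have "\<forall>X. X \<subseteq> carrier G \<and> infinite X \<longrightarrow>
       (\<exists>F. F \<subseteq> X \<and> finite F \<and> F \<noteq> {} \<and> finite (\<Inter>g\<in>F. g <# B))"
    proof (intro allI impI)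
      fix X assume X: "X \<subseteq> carrier G \<and> infinite X"
      show "\<exists>F. F \<subseteq> X \<and> finite F \<and> F \<noteq> {} \<and> finite (\<Inter>g\<in>F. g <# B)"
        unfolding B_def
        by (rule sparse_part[where Lf=Lf and x=x, OF Lc Lcard Lfin Duniq xc Tuniq]) (use X in auto)
    qed
    then show ?thesis unfolding Sp_def using Bc by (intro CollectI conjI)
  qed
  have nft: "B \<notin> FT G"
  proof
    assume "B \<in> FT G"
    then have "\<exists>n. n_thin G n B" unfolding FT_def by simp
    then obtain n where n: "n_thin G n B" by (elim exE)
    define S where "S = (\<lambda>a. inv a) ` Lf n"
    have Sc: "S \<subseteq> carrier G" unfolding S_def using Lc[of n] by auto
    have "inj_on (\<lambda>a. inv a) (Lf n)" by (rule inj_on_subset[OF inv_inj Lc])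
    then have "card S = card (Lf n)" unfolding S_def by (rule card_image)
    then have cS: "card S = Suc n" using Lcard[of n] by simp
    have fin: "finite (\<Inter>g\<in>S. g <# B)" by (rule thin_set[OF n Sc cS])
    have sub: "x ` {j. nn j = n} \<subseteq> (\<Inter>g\<in>S. g <# B)"
    proof
      fix z assume "z \<in> x ` {j. nn j = n}"
      then obtain j where j: "nn j = n" "z = x j" by blast
      show "z \<in> (\<Inter>g\<in>S. g <# B)"
      proof
        fix g assume "g \<in> S"
        then obtain a where a: "a \<in> Lf n" "g = inv a" unfolding S_def by blast
        have ac: "a \<in> carrier G" using a(1) Lc[of n] by blast
        have gc: "g \<in> carrier G" using a(2) ac by simp
        have "a \<in> Lf (nn j)" using a j by simp
        then have "a \<otimes> x j \<in> Pc Lf x j" unfolding Pc_def by (rule imageI)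
        then have "a \<otimes> x j \<in> B" unfolding B_def by blast
        moreover have "inv g \<otimes> z = a \<otimes> x j" using a(2) ac j(2) by simp
        ultimately have "inv g \<otimes> z \<in> B" by simp
        moreover have "z \<in> carrier G" using j(2) xc by simp
        ultimately show "z \<in> g <# B" using lcoset_mem[OF gc Bc, of z] by blast
      qed
    qed
    have "infinite (x ` {j. nn j = n})"
    proof
      assume "finite (x ` {j. nn j = n})"
      moreover have "inj_on x {j. nn j = n}" by (rule inj_on_subset[OF xinj subset_UNIV])
      ultimately have "finite {j. nn j = n}" by (rule finite_imageD)
      then show False using nn_infinite[of n] by contradiction
    qed
    moreover have "finite (x ` {j. nn j = n})" by (rule finite_subset[OF sub fin])
    ultimately show False by contradiction
  qed
  show ?thesis using sp nft by blast
qed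

end



context group begin

lemma FT_sub_Sp: "FT G \<subseteq> Sp G"
proof
  fix C assume "C \<in> FT G"
  then obtain n where C: "C \<subseteq> carrier G" "n_thin G n C" unfolding FT_def by blast
  have "\<forall>X. X \<subseteq> carrier G \<and> infinite X \<longrightarrow>
     (\<exists>F. F \<subseteq> X \<and> finite F \<and> F \<noteq> {} \<and> finite (\<Inter>g\<in>F. g <# C))"
  proof (intro allI impI)
    fix X assume X: "X \<subseteq> carrier G \<and> infinite X"
    then obtain F where F: "finite F" "card F = Suc n" "F \<subseteq> X"
      using infinite_arbitrarily_large by blast
    have "F \<noteq> {}" using F(2) by auto
    moreover have "finite (\<Inter>g\<in>F. g <# C)" using thin_set[OF C(2)] F X by blast
    ultimately show "\<exists>F. F \<subseteq> X \<and> finite F \<and> F \<noteq> {} \<and> finite (\<Inter>g\<in>F. g <# C)"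
      using F by blast
  qed
  then show "C \<in> Sp G" unfolding Sp_def using C(1) by (intro CollectI conjI)
qed

lemma closure_sub_hat:
  "uf_closure G {uf_mult G p q | p q. p \<in> freeUF G \<and> q \<in> freeUF G} \<subseteq> ideal_hat G (FT G)"
proof
  fix p assume p: "p \<in> uf_closure G {uf_mult G p q | p q. p \<in> freeUF G \<and> q \<in> freeUF G}"
  have pb: "p \<in> betaG G" using p unfolding uf_closure_def by blast
  have "\<forall>C\<in>FT G. carrier G - C \<in> p"
  proof
    fix C assume "C \<in> FT G"
    then obtain n where C: "C \<subseteq> carrier G" "n_thin G n C" unfolding FT_def by blast
    show "carrier G - C \<in> p"
    proof (rule ccontr)
      assume "carrier G - C \<notin> p"
      then have "C \<in> p" using betaG_ultra[OF pb C(1)] by blast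
      then obtain r where "r \<in> {uf_mult G p q | p q. p \<in> freeUF G \<and> q \<in> freeUF G}" "C \<in> r"
        using p unfolding uf_closure_def by blast
      then obtain p' q' where "p' \<in> freeUF G" "q' \<in> freeUF G" "C \<in> uf_mult G p' q'" by blast
      then show False using thin_not_in_prod C(2) by blast
    qed
  qed
  then show "p \<in> ideal_hat G (FT G)" unfolding ideal_hat_def using pb by blast
qed

lemma hat_not_sub_closure:
  assumes "infinite (carrier G)"
  shows "\<exists>p. p \<in> ideal_hat G (FT G) \<and>
     p \<notin> uf_closure G {uf_mult G p q | p q. p \<in> freeUF G \<and> q \<in> freeUF G}"
proof -
  obtain B where B: "B \<in> Sp G" "B \<notin> FT G" using exists_sparse_not_FT[OF assms] by blast
  have Bc: "B \<subseteq> carrier G" using B(1) unfolding Sp_def by blast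
  define base where "base = insert B ((\<lambda>C. carrier G - C) ` FT G)"
  have b1: "base \<subseteq> Pow (carrier G)" unfolding base_def using Bc by auto
  have b2: "fip base" unfolding fip_def
  proof (intro allI impI)
    fix S assume S: "finite S" "S \<subseteq> base"
    define Cs where "Cs = {C \<in> FT G. carrier G - C \<in> S}"
    have "Cs \<subseteq> (\<lambda>X. carrier G - X) ` S"
    proof
      fix C assume "C \<in> Cs"
      then have "C \<subseteq> carrier G" "carrier G - C \<in> S" unfolding Cs_def FT_def by auto
      then have "C = carrier G - (carrier G - C)" by blast
      then show "C \<in> (\<lambda>X. carrier G - X) ` S" using \<open>carrier G - C \<in> S\<close> by blast
    qed
    then have "finite Cs" using S(1) finite_surj by blast
    moreover have "Cs \<subseteq> FT G" unfolding Cs_def by blast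
    ultimately have UC: "\<Union>Cs \<in> FT G" using FT_Union by blast
    show "carrier G \<inter> \<Inter>S \<noteq> {}"
    proof
      assume E: "carrier G \<inter> \<Inter>S = {}"
      have "B \<subseteq> \<Union>Cs"
      proof
        fix b assume "b \<in> B"
        then have "b \<in> carrier G" using Bc by blast
        then have "b \<notin> \<Inter>S" using E by blast
        then obtain s where s: "s \<in> S" "b \<notin> s" by blast
        then have "s \<noteq> B" using \<open>b \<in> B\<close> by blast
        then obtain C where C: "C \<in> FT G" "s = carrier G - C" using s S(2) unfolding base_def by blast
        then have "C \<in> Cs" unfolding Cs_def using s by blast
        moreover have "b \<in> C" using C s \<open>b \<in> carrier G\<close> by blast
        ultimately show "b \<in> \<Union>Cs" by blast
      qed
      then have "B \<in> FT G" using FT_subset UC by blast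
      then show False using B(2) by blast
    qed
  qed
  obtain p where p: "p \<in> betaG G" "base \<subseteq> p" using uf_exists[OF b1 b2] by blast
  have "p \<in> ideal_hat G (FT G)" unfolding ideal_hat_def using p unfolding base_def by blast
  moreover have "p \<notin> uf_closure G {uf_mult G p q | p q. p \<in> freeUF G \<and> q \<in> freeUF G}"
  proof
    assume "p \<in> uf_closure G {uf_mult G p q | p q. p \<in> freeUF G \<and> q \<in> freeUF G}"
    moreover have "B \<in> p" using p unfolding base_def by blast
    ultimately obtain r where "r \<in> {uf_mult G p q | p q. p \<in> freeUF G \<and> q \<in> freeUF G}" "B \<in> r"
      unfolding uf_closure_def by blast
    then obtain p' q' where "p' \<in> freeUF G" "q' \<in> freeUF G" "B \<in> uf_mult G p' q'" by blast
    then show False using sparse_not_in_prod B(1) by blast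
  qed
  ultimately show ?thesis by blast
qed

end

theorem theorem6p6:
  fixes G :: "('a, 'b) monoid_scheme"
  assumes "group G" and "infinite (carrier G)"
  shows "FT G \<subset> Sp G \<and>
         uf_closure G {uf_mult G p q | p q. p \<in> freeUF G \<and> q \<in> freeUF G}
           \<subset> ideal_hat G (FT G)"
proof -
  interpret group G by (rule assms(1))
  obtain B where B: "B \<in> Sp G" "B \<notin> FT G" using exists_sparse_not_FT[OF assms(2)] by blast
  have 1: "FT G \<subset> Sp G" using FT_sub_Sp B by blast
  obtain p where p: "p \<in> ideal_hat G (FT G)"
     "p \<notin> uf_closure G {uf_mult G p q | p q. p \<in> freeUF G \<and> q \<in> freeUF G}"
    using hat_not_sub_closure[OF assms(2)] by blast
  have 2: "uf_closure G {uf_mult G p q | p q. p \<in> freeUF G \<and> q \<in> freeUF G}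
           \<subset> ideal_hat G (FT G)" using closure_sub_hat p by blast
  show ?thesis using 1 2 by blast
qed


end
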